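(* With $F(q)$ as in the context, write $F(q)=\exp\left(\sum_{d\ge1}y'_dq^d\right)$. Then for every $d\ge1$, $$y'_d=\sum_{0<d_1<\dots<d_r=d}\frac{y_{d_1}\prod_{i=2}^r\left(x_{d_i-d_{i-1}}d_{i-1}\right)}{r!}.$$
   Context: $x_1,x_2,\dots,y_1,y_2,\dots$ are indeterminates and $F(q)=\sum_{d\ge0}\sum_{0=d_0<d_1<\dots<d_r=d}\frac{\prod_{i=1}^r(y_{d_i-d_{i-1}}+x_{d_i-d_{i-1}}d_{i-1})}{r!}q^d$, a formal power series in $q$ with constant term $1$ and coefficients in $\mathbb Q[x_k,y_k]_{k\ge1}$. *)

theory Defs
  imports "HOL-Computational_Algebra.Formal_Power_Series"
begin

text \<open>Chains 0 = d_0 < d_1 < ... < d_r = d, encoded by the list [d_1, ..., d_r]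
  (so the full chain is 0 # ds; the empty list is the chain with r = 0, only for d = 0).\<close>
definition chains :: "nat \<Rightarrow> nat list set" where
  "chains d = {ds. sorted_wrt (<) (0 # ds) \<and> last (0 # ds) = d}"

text \<open>The coefficient of q^d in F(q), with the indeterminates x_k, y_k
  specialised to arbitrary elements of a field of characteristic 0.\<close>
definition F_coeff :: "(nat \<Rightarrow> 'a::field_char_0) \<Rightarrow> (nat \<Rightarrow> 'a) \<Rightarrow> nat \<Rightarrow> 'a" where
  "F_coeff x y d = (\<Sum>ds\<in>chains d. let L = 0 # ds in
      (\<Prod>i\<in>{1..length ds}. y (L!i - L!(i-1)) + x (L!i - L!(i-1)) * of_nat (L!(i-1)))
      / fact (length ds))"

definition F_series :: "(nat \<Rightarrow> 'a::field_char_0) \<Rightarrow> (nat \<Rightarrow> 'a) \<Rightarrow> 'a fps" where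
  "F_series x y = Abs_fps (F_coeff x y)"

end

theory Submission
  imports Defs
begin
unbundle fps_syntax


definition chainsN :: "nat \<Rightarrow> nat \<Rightarrow> nat list set" where
  "chainsN n d = {ds \<in> chains d. length ds = n}"

definition chprod :: "(nat \<Rightarrow> nat \<Rightarrow> 'a::comm_ring_1) \<Rightarrow> nat list \<Rightarrow> 'a" where
  "chprod w ds = (\<Prod>i\<in>{1..length ds}. w ((0#ds)!(i-1)) ((0#ds)!i))"

definition chsum :: "(nat \<Rightarrow> nat \<Rightarrow> 'a::comm_ring_1) \<Rightarrow> nat \<Rightarrow> nat \<Rightarrow> 'a" where
  "chsum w n d = (\<Sum>ds\<in>chainsN n d. chprod w ds)"

lemma sorted_le_last: "sorted_wrt (<) xs \<Longrightarrow> (v::nat) \<in> set xs \<Longrightarrow> v \<le> last xs"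
proof (induction xs)
  case (Cons a xs)
  show ?case
  proof (cases "xs = []")
    case False
    then have "last xs \<in> set xs" by simp
    then show ?thesis using Cons by (auto simp: less_imp_le)
  qed (use Cons in auto)
qed simp

lemma chains_bounds:
  assumes "ds \<in> chains d" shows "set ds \<subseteq> {1..d}" "length ds \<le> d"
proof -
  have s: "sorted_wrt (<) (0#ds)" and l: "last (0#ds) = d" using assms by (auto simp: chains_def)
  have "v \<le> d" if "v \<in> set ds" for v using sorted_le_last[OF s, of v] that l by auto
  moreover have "0 < v" if "v \<in> set ds" for v using s that by auto
  ultimately show st: "set ds \<subseteq> {1..d}" by force
  have "distinct ds" using s by (simp add: strict_sorted_iff)
  then have "length ds = card (set ds)" by (simp add: distinct_card)
  also have "\<dots> \<le> card {1..d}" using st by (intro card_mono) auto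
  finally show "length ds \<le> d" by simp
qed

lemma finite_chains: "finite (chains d)"
proof (rule finite_subset)
  show "chains d \<subseteq> {xs. set xs \<subseteq> {..d} \<and> length xs \<le> d}"
    using chains_bounds by fastforce
  show "finite {xs. set xs \<subseteq> {..d} \<and> length xs \<le> d}" by (rule finite_lists_length_le) auto
qed

lemma finite_chainsN: "finite (chainsN n d)"
  using finite_chains by (auto simp: chainsN_def)

lemma chainsN_empty: "d < n \<Longrightarrow> chainsN n d = {}"
  using chains_bounds(2) by (fastforce simp: chainsN_def)

lemma chsum_small: "d < n \<Longrightarrow> chsum w n d = 0"
  by (simp add: chsum_def chainsN_empty)

lemma chainsN_0: "chainsN 0 d = (if d = 0 then {[]} else {})"
  by (auto simp: chainsN_def chains_def)

lemma chsum_0: "chsum w 0 d = (if d = 0 then 1 else 0)"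
  by (simp add: chsum_def chainsN_0 chprod_def)

lemma chainsN_Suc: "chainsN (Suc n) d = (\<lambda>(e,ds). ds @ [d]) ` (SIGMA e:{..<d}. chainsN n e)"
proof (intro equalityI subsetI)
  fix ds' assume a: "ds' \<in> chainsN (Suc n) d"
  then have ne: "ds' \<noteq> []" and s: "sorted_wrt (<) (0#ds')" and l: "last ds' = d"
    and len: "length ds' = Suc n"
    by (auto simp: chainsN_def chains_def)
  define ds where "ds = butlast ds'"
  have eq: "ds' = ds @ [d]" using ne l by (metis append_butlast_last_id ds_def)
  have s2: "sorted_wrt (<) (0#ds)" and lt: "\<forall>v\<in>set (0#ds). v < d"
    using s unfolding eq by (simp_all add: sorted_wrt_append)
  have "last (0#ds) < d" using lt last_in_set by blast
  moreover have "ds \<in> chainsN n (last (0#ds))"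
    using s2 len by (simp add: chainsN_def chains_def ds_def)
  ultimately show "ds' \<in> (\<lambda>(e,ds). ds @ [d]) ` (SIGMA e:{..<d}. chainsN n e)"
    using eq by force
next
  fix ds' assume "ds' \<in> (\<lambda>(e,ds). ds @ [d]) ` (SIGMA e:{..<d}. chainsN n e)"
  then obtain e ds where e: "e < d" and ds: "ds \<in> chainsN n e" and eq: "ds' = ds @ [d]" by auto
  have s: "sorted_wrt (<) (0#ds)" and l: "last (0#ds) = e" and len: "length ds = n"
    using ds by (auto simp: chainsN_def chains_def)
  have "\<forall>v\<in>set (0#ds). v < d" using sorted_le_last[OF s] l e by fastforce
  then have "sorted_wrt (<) ((0#ds) @ [d])" using s
    by (simp only: sorted_wrt_append) simp
  then have "sorted_wrt (<) (0#ds @ [d])" by simp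
  then show "ds' \<in> chainsN (Suc n) d" using eq len by (simp add: chainsN_def chains_def)
qed

lemma chprod_snoc: "chprod w (ds @ [d]) = chprod w ds * w (last (0#ds)) d"
proof -
  let ?m = "length ds"
  have "chprod w (ds @ [d]) = (\<Prod>i\<in>{1..Suc ?m}. w (((0#ds)@[d])!(i-1)) (((0#ds)@[d])!i))"
    by (simp add: chprod_def)
  also have "\<dots> = (\<Prod>i\<in>{1..?m}. w (((0#ds)@[d])!(i-1)) (((0#ds)@[d])!i)) * w (((0#ds)@[d])!?m) d"
    by (simp add: prod.nat_ivl_Suc' nth_append)
  moreover have "(\<Prod>i\<in>{1..?m}. w (((0#ds)@[d])!(i-1)) (((0#ds)@[d])!i)) = chprod w ds"
    unfolding chprod_def by (intro prod.cong refl) (auto simp: nth_append nth_Cons')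
  moreover have "((0#ds)@[d])!?m = last (0#ds)"
    by (simp add: nth_append last_conv_nth)
  ultimately show ?thesis by (simp only:)
qed

lemma chsum_Suc: "chsum w (Suc n) d = (\<Sum>e<d. chsum w n e * w e d)"
proof -
  have inj: "inj_on (\<lambda>(e,ds). ds @ [d]) (SIGMA e:{..<d}. chainsN n e)"
    unfolding inj_on_def chainsN_def chains_def by auto
  have "chsum w (Suc n) d = (\<Sum>(e,ds)\<in>(SIGMA e:{..<d}. chainsN n e). chprod w (ds @ [d]))"
    unfolding chsum_def chainsN_Suc by (subst sum.reindex[OF inj]) (simp add: case_prod_unfold)
  also have "\<dots> = (\<Sum>e<d. \<Sum>ds\<in>chainsN n e. chprod w ds * w e d)"
    by (subst sum.Sigma[symmetric]) (auto simp: finite_chainsN chprod_snoc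
        intro!: sum.cong, auto simp: chainsN_def chains_def)
  also have "\<dots> = (\<Sum>e<d. chsum w n e * w e d)"
    by (simp add: chsum_def sum_distrib_right)
  finally show ?thesis .
qed

lemma sum_chains_group:
  "(\<Sum>ds\<in>chains d. f ds) = (\<Sum>n\<le>d. \<Sum>ds\<in>chainsN n d. f ds)"
proof -
  have "(\<Sum>ds\<in>chains d. f ds) = (\<Sum>ds\<in>chains d. \<Sum>n\<le>d. if length ds = n then f ds else 0)"
    using chains_bounds(2) by (intro sum.cong refl) (simp add: sum.delta)
  also have "\<dots> = (\<Sum>n\<le>d. \<Sum>ds\<in>chains d. if length ds = n then f ds else 0)"
    by (rule sum.swap)
  also have "\<dots> = (\<Sum>n\<le>d. \<Sum>ds\<in>chainsN n d. f ds)"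
    unfolding chainsN_def by (rule sum.cong[OF refl]) (simp add: sum.inter_filter finite_chains)
  finally show ?thesis .
qed


definition theta :: "'a::comm_ring_1 fps \<Rightarrow> 'a fps" where
  "theta f = Abs_fps (\<lambda>n. of_nat n * f $ n)"

lemma theta_nth[simp]: "theta f  $  n = of_nat n * f $ n" by (simp add: theta_def)

lemma theta_add[simp]: "theta (f + g) = theta f + theta g"
  by (rule fps_ext) (simp add: algebra_simps)
lemma theta_diff[simp]: "theta (f - g) = theta f - theta g"
  by (rule fps_ext) (simp add: algebra_simps)
lemma theta_zero[simp]: "theta 0 = 0" by (rule fps_ext) simp
lemma theta_one[simp]: "theta 1 = 0" by (rule fps_ext) simp
lemma theta_sum: "theta (\<Sum>i\<in>A. f i) = (\<Sum>i\<in>A. theta (f i))"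
  by (rule fps_ext) (simp add: fps_sum_nth sum_distrib_left)
lemma theta_const_mult[simp]: "theta (fps_const c * f) = fps_const c * theta f"
  by (rule fps_ext) (simp add: algebra_simps)
lemma theta_of_nat_mult[simp]: "theta (of_nat k * f) = of_nat k * theta f"
  by (simp flip: fps_of_nat)
lemma theta_mult: "theta (f * g) = theta f * g + f * theta g"
proof (rule fps_ext)
  fix n
  have "theta (f * g)  $  n = (\<Sum>i=0..n. of_nat n * (f $ i * g $ (n-i)))"
    by (simp add: fps_mult_nth sum_distrib_left)
  also have "\<dots> = (\<Sum>i=0..n. of_nat i * f $ i * g $ (n-i) + f $ i * (of_nat (n-i) * g $ (n-i)))"
  proof (intro sum.cong refl)
    fix i assume "i \<in> {0..n}"
    then have "of_nat n = (of_nat i + of_nat (n-i) :: 'a)" by (simp flip: of_nat_add)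
    then show "of_nat n * (f $ i * g $ (n-i)) = of_nat i * f $ i * g $ (n-i) + f $ i * (of_nat (n-i) * g $ (n-i))"
      by (simp add: algebra_simps)
  qed
  also have "\<dots> = (theta f * g + f * theta g)  $  n"
    by (simp add: fps_mult_nth sum.distrib)
  finally show "theta (f * g)  $  n = (theta f * g + f * theta g)  $  n" .
qed

lemma theta_eq: "theta f = fps_X * fps_deriv f"
  by (rule fps_ext) (auto simp: fps_X_mult_nth)

definition Dt :: "'a::comm_ring_1 fps fps \<Rightarrow> 'a fps fps" where
  "Dt P = Abs_fps (\<lambda>n. theta (P $ n))"

lemma Dt_nth[simp]: "Dt P  $  n = theta (P $ n)" by (simp add: Dt_def)
lemma Dt_add[simp]: "Dt (P + Q) = Dt P + Dt Q" by (rule fps_ext) simp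
lemma Dt_diff[simp]: "Dt (P - Q) = Dt P - Dt Q" by (rule fps_ext) simp
lemma Dt_mult: "Dt (P * Q) = Dt P * Q + P * Dt Q"
  by (rule fps_ext) (simp add: fps_mult_nth theta_sum theta_mult sum.distrib)
lemma Dt_deriv: "fps_deriv (Dt P) = Dt (fps_deriv P)"
  by (rule fps_ext) (simp del: of_nat_Suc)

lemma ode_zero:
  fixes W :: "'a::field_char_0 fps fps"
  assumes "\<And>n. (\<forall>k\<le>n. W $ k = 0) \<Longrightarrow> fps_deriv W  $  n = 0" and "W $ 0 = 0"
  shows "W = 0"
proof -
  have "\<forall>k\<le>n. W $ k = 0" for n
  proof (induction n)
    case 0 then show ?case using assms(2) by simp
  next
    case (Suc n)
    have "fps_deriv W  $  n = 0" using assms(1) Suc by blast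
    then have "of_nat (Suc n) * W  $  Suc n = 0" by simp
    moreover have "(of_nat (Suc n) :: 'a fps) \<noteq> 0"
    proof
      assume "(of_nat (Suc n) :: 'a fps) = 0"
      then have "(fps_const (of_nat (Suc n)) :: 'a fps) $ 0 = 0" by (simp only: fps_of_nat) simp
      then show False by (simp del: of_nat_Suc)
    qed
    ultimately have "W  $  Suc n = 0" by simp
    then show ?case using Suc by (auto simp: le_Suc_eq)
  qed
  then have "W $ n = 0" for n by blast
  then show ?thesis by (rule_tac fps_ext) (simp only: fps_zero_nth)
qed

lemma ode_zero_mult:
  fixes W :: "'a::field_char_0 fps fps"
  assumes "fps_deriv W = K * W" and "W $ 0 = 0"
  shows "W = 0"
  using assms by (intro ode_zero) (auto simp: fps_mult_nth intro!: sum.neutral)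

definition ev :: "'a::comm_ring_1 fps fps \<Rightarrow> 'a fps" where
  "ev P = Abs_fps (\<lambda>d. \<Sum>n\<le>d. P $ n $ d)"

definition graded :: "'a::comm_ring_1 fps fps \<Rightarrow> bool" where
  "graded P \<longleftrightarrow> (\<forall>n d. d < n \<longrightarrow> P $ n $ d = 0)"

lemma ev_nth: "ev P  $  d = (\<Sum>n\<le>d. P $ n $ d)" by (simp add: ev_def)

lemma ev_nth_ext: assumes "graded P" "d \<le> N" shows "ev P  $  d = (\<Sum>n\<le>N. P $ n $ d)"
  unfolding ev_nth using assms
  by (intro sum.mono_neutral_left) (auto simp: graded_def)

lemma graded_Dt: "graded P \<Longrightarrow> graded (Dt P)" by (simp add: graded_def)

lemma ev_Dt: "ev (Dt P) = theta (ev P)"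
  by (rule fps_ext) (simp add: ev_nth sum_distrib_left)

lemma ev_mult:
  assumes P: "graded P" and Q: "graded Q"
  shows "ev (P * Q) = ev P * ev Q"
proof (rule fps_ext)
  fix d
  define f where "f i j e = P $ i $ e * Q $ j $ (d-e)" for i j e
  have "ev (P * Q)  $  d = (\<Sum>n\<le>d. \<Sum>i\<le>n. \<Sum>e=0..d. f i (n-i) e)"
    by (simp add: ev_nth fps_mult_nth fps_sum_nth f_def atLeast0AtMost)
  also have "\<dots> = (\<Sum>(i,j)\<in>{(i,j). i+j \<le> d}. \<Sum>e=0..d. f i j e)"
    by (rule sum.triangle_reindex_eq[symmetric])
  also have "\<dots> = (\<Sum>(i,j)\<in>{..d}\<times>{..d}. \<Sum>e=0..d. f i j e)"
  proof (rule sum.mono_neutral_left)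
    show "\<forall>x\<in>{..d}\<times>{..d} - {(i,j). i+j \<le> d}. (\<lambda>(i,j). \<Sum>e=0..d. f i j e) x = 0"
    proof
      fix x assume "x \<in> {..d}\<times>{..d} - {(i,j). i+j \<le> d}"
      then obtain i j where x: "x = (i,j)" "d < i+j" by auto
      have "f i j e = 0" if "e \<in> {0..d}" for e
      proof -
        have "e < i \<or> d - e < j" using x that by auto
        then show "f i j e = 0" using P Q by (auto simp: f_def graded_def)
      qed
      then show "(\<lambda>(i,j). \<Sum>e=0..d. f i j e) x = 0" using x by simp
    qed
  qed auto
  also have "\<dots> = (\<Sum>i\<le>d. \<Sum>j\<le>d. \<Sum>e=0..d. f i j e)"
    by (simp add: sum.cartesian_product[symmetric])
  also have "\<dots> = (\<Sum>i\<le>d. \<Sum>e=0..d. \<Sum>j\<le>d. f i j e)"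
    by (rule sum.cong[OF refl], rule sum.swap)
  also have "\<dots> = (\<Sum>e=0..d. \<Sum>i\<le>d. \<Sum>j\<le>d. f i j e)"
    by (rule sum.swap)
  finally have 1: "ev (P * Q)  $  d = (\<Sum>e=0..d. \<Sum>i\<le>d. \<Sum>j\<le>d. f i j e)" .
  have "(ev P * ev Q)  $  d = (\<Sum>e=0..d. (\<Sum>i\<le>d. P $ i $ e) * (\<Sum>j\<le>d. Q $ j $ (d-e)))"
    unfolding fps_mult_nth by (intro sum.cong refl) (simp add: ev_nth_ext[OF P, of _ d] ev_nth_ext[OF Q, of _ d])
  also have "\<dots> = (\<Sum>e=0..d. \<Sum>i\<le>d. \<Sum>j\<le>d. f i j e)"
    by (simp add: f_def sum_product)
  finally show "ev (P * Q)  $  d = (ev P * ev Q)  $  d" using 1 by simp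
qed


definition Yf :: "(nat \<Rightarrow> 'a::comm_ring_1) \<Rightarrow> 'a fps" where
  "Yf y = Abs_fps (\<lambda>k. if k = 0 then 0 else y k)"
definition wF :: "(nat \<Rightarrow> 'a::comm_ring_1) \<Rightarrow> (nat \<Rightarrow> 'a) \<Rightarrow> nat \<Rightarrow> nat \<Rightarrow> 'a" where
  "wF x y p c = y (c - p) + x (c - p) * of_nat p"
definition wB :: "(nat \<Rightarrow> 'a::comm_ring_1) \<Rightarrow> (nat \<Rightarrow> 'a) \<Rightarrow> nat \<Rightarrow> nat \<Rightarrow> 'a" where
  "wB x y p c = (if p = 0 then y c else 0) + x (c - p) * of_nat p"
definition Afps :: "(nat \<Rightarrow> 'a::comm_ring_1) \<Rightarrow> (nat \<Rightarrow> 'a) \<Rightarrow> nat \<Rightarrow> 'a fps" where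
  "Afps x y n = Abs_fps (chsum (wF x y) n)"
definition Bq :: "(nat \<Rightarrow> 'a::comm_ring_1) \<Rightarrow> (nat \<Rightarrow> 'a) \<Rightarrow> nat \<Rightarrow> 'a fps" where
  "Bq x y n = Abs_fps (chsum (wB x y) (Suc n))"

lemma Yf_nth[simp]: "Yf y $ k = (if k = 0 then 0 else y k)" by (simp add: Yf_def)

lemma A_0: "Afps x y 0 = 1"
  by (rule fps_ext) (simp add: Afps_def chsum_0)

lemma A_Suc: "Afps x y (Suc n) = Afps x y n * Yf y + theta (Afps x y n) * Yf x"
proof (rule fps_ext)
  fix d
  let ?a = "chsum (wF x y) n"
  have "(Afps x y n * Yf y + theta (Afps x y n) * Yf x) $ d =
      (\<Sum>i<Suc d. ?a i * Yf y $ (d-i) + of_nat i * ?a i * Yf x $ (d-i))"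
    by (simp add: fps_mult_nth atLeast0AtMost lessThan_Suc_atMost sum.distrib Afps_def)
  also have "\<dots> = (\<Sum>i<d. ?a i * Yf y $ (d-i) + of_nat i * ?a i * Yf x $ (d-i))"
    by simp
  also have "\<dots> = (\<Sum>i<d. ?a i * wF x y i d)"
    by (intro sum.cong refl) (auto simp: wF_def algebra_simps)
  also have "\<dots> = Afps x y (Suc n) $ d"
    by (simp add: Afps_def chsum_Suc)
  finally show "Afps x y (Suc n) $ d = (Afps x y n * Yf y + theta (Afps x y n) * Yf x) $ d" ..
qed

lemma chsum_1: "chsum w (Suc 0) d = (if d = 0 then 0 else w 0 d)"
proof -
  have "chsum w (Suc 0) d = (\<Sum>e<d. if e = 0 then w e d else 0)"
    unfolding chsum_Suc chsum_0 by (intro sum.cong refl) simp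
  also have "\<dots> = (if d = 0 then 0 else w 0 d)" by (simp add: sum.delta)
  finally show ?thesis .
qed

lemma B_0: "Bq x y 0 = Yf y"
  by (rule fps_ext) (simp add: Bq_def chsum_1 wB_def)

lemma B_Suc: "Bq x y (Suc n) = theta (Bq x y n) * Yf x"
proof (rule fps_ext)
  fix d
  let ?a = "chsum (wB x y) (Suc n)"
  have "(theta (Bq x y n) * Yf x) $ d = (\<Sum>i<Suc d. of_nat i * ?a i * Yf x $ (d-i))"
    by (simp add: fps_mult_nth atLeast0AtMost lessThan_Suc_atMost Bq_def)
  also have "\<dots> = (\<Sum>i<d. of_nat i * ?a i * Yf x $ (d-i))"
    by simp
  also have "\<dots> = (\<Sum>i<d. ?a i * wB x y i d)"
  proof (intro sum.cong refl)
    fix i assume "i \<in> {..<d}"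
    then show "of_nat i * ?a i * Yf x $ (d-i) = ?a i * wB x y i d"
      by (cases "i = 0") (auto simp: wB_def chsum_small)
  qed
  also have "\<dots> = Bq x y (Suc n) $ d"
    by (simp add: Bq_def chsum_Suc[of _ "Suc n"])
  finally show "Bq x y (Suc n) $ d = (theta (Bq x y n) * Yf x) $ d" ..
qed

lemma fact_const: "(of_nat (Suc n) :: 'a::field_char_0 fps) * fps_const (1 / fact (Suc n)) = fps_const (1 / fact n)"
proof -
  have "(of_nat (Suc n) :: 'a) * (1 / fact (Suc n)) = 1 / fact n"
    by (simp add: fact_Suc field_simps del: of_nat_Suc)
  then show ?thesis by (simp flip: fps_of_nat add: fps_const_mult del: of_nat_Suc)
qed

definition PP :: "(nat \<Rightarrow> 'a::field_char_0) \<Rightarrow> (nat \<Rightarrow> 'a) \<Rightarrow> 'a fps fps" where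
  "PP x y = Abs_fps (\<lambda>n. fps_const (1 / fact n) * Afps x y n)"
definition HH :: "(nat \<Rightarrow> 'a::field_char_0) \<Rightarrow> (nat \<Rightarrow> 'a) \<Rightarrow> 'a fps fps" where
  "HH x y = Abs_fps (\<lambda>n. fps_const (1 / fact n) * Bq x y n)"
definition GG :: "(nat \<Rightarrow> 'a::field_char_0) \<Rightarrow> (nat \<Rightarrow> 'a) \<Rightarrow> 'a fps fps" where
  "GG x y = Abs_fps (\<lambda>n. if n = 0 then 0 else fps_const (1 / fact n) * Bq x y (n - 1))"
definition Lt :: "(nat \<Rightarrow> 'a::field_char_0) \<Rightarrow> (nat \<Rightarrow> 'a) \<Rightarrow> 'a fps fps \<Rightarrow> 'a fps fps" where
  "Lt x y Q = Q * fps_const (Yf y) + Dt Q * fps_const (Yf x)"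

lemma Lt_nth: "Lt x y Q $ n = Q $ n * Yf y + theta (Q $ n) * Yf x"
  by (simp add: Lt_def)

lemma P_deriv: "fps_deriv (PP x y) = Lt x y (PP x y)"
proof (rule fps_ext)
  fix n
  have "fps_deriv (PP x y) $ n = (of_nat (Suc n) * fps_const (1 / fact (Suc n))) * Afps x y (Suc n)"
    by (simp add: PP_def mult.assoc del: of_nat_Suc)
  also have "\<dots> = fps_const (1 / fact n) * Afps x y (Suc n)" by (simp only: fact_const)
  also have "\<dots> = Lt x y (PP x y) $ n"
    by (simp add: Lt_nth PP_def A_Suc) (simp add: algebra_simps)
  finally show "fps_deriv (PP x y) $ n = Lt x y (PP x y) $ n" .
qed

lemma H_deriv: "fps_deriv (HH x y) = Dt (HH x y) * fps_const (Yf x)"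
proof (rule fps_ext)
  fix n
  have "fps_deriv (HH x y) $ n = (of_nat (Suc n) * fps_const (1 / fact (Suc n))) * Bq x y (Suc n)"
    by (simp add: HH_def mult.assoc del: of_nat_Suc)
  also have "\<dots> = fps_const (1 / fact n) * Bq x y (Suc n)" by (simp only: fact_const)
  also have "\<dots> = (Dt (HH x y) * fps_const (Yf x)) $ n"
    by (simp add: HH_def B_Suc; simp add: algebra_simps)
  finally show "fps_deriv (HH x y) $ n = (Dt (HH x y) * fps_const (Yf x)) $ n" .
qed

lemma G_deriv: "fps_deriv (GG x y) = HH x y"
proof (rule fps_ext)
  fix n
  have "fps_deriv (GG x y) $ n = (of_nat (Suc n) * fps_const (1 / fact (Suc n))) * Bq x y n"
    by (simp add: GG_def mult.assoc del: of_nat_Suc)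
  also have "\<dots> = HH x y $ n" by (simp only: fact_const) (simp add: HH_def)
  finally show "fps_deriv (GG x y) $ n = HH x y $ n" .
qed

lemma Lt_mult: "Lt x y (K * Q) = (Dt K * fps_const (Yf x)) * Q + K * Lt x y Q"
  by (simp add: Lt_def Dt_mult algebra_simps)

lemma Lt_diff: "Lt x y (K - Q) = Lt x y K - Lt x y Q"
  by (simp add: Lt_def algebra_simps)

lemma Lt_deriv: "fps_deriv (Lt x y Q) = Lt x y (fps_deriv Q)"
  by (simp add: Lt_def fps_deriv_mult Dt_deriv)

lemma P0: "PP x y $ 0 = 1" by (simp add: PP_def A_0)

lemma P_ode: "fps_deriv (PP x y) = HH x y * PP x y"
proof -
  define V where "V = fps_deriv (PP x y) - HH x y * PP x y"
  have dd: "fps_deriv (fps_deriv (PP x y)) = Lt x y (fps_deriv (PP x y))"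
    by (metis P_deriv Lt_deriv)
  have dV: "fps_deriv V = Lt x y V"
    unfolding V_def using dd
    by (simp add: fps_deriv_mult Lt_diff Lt_mult Lt_deriv H_deriv flip: P_deriv)
  have "V = 0"
  proof (rule ode_zero)
    fix n assume "\<forall>k\<le>n. V $ k = 0"
    then show "fps_deriv V $ n = 0" by (simp add: dV Lt_nth)
  next
    show "V $ 0 = 0" by (simp add: V_def P_deriv Lt_nth P0 HH_def B_0)
  qed
  then show ?thesis by (simp add: V_def)
qed

lemma Dt_ode: "Dt (PP x y) = Dt (GG x y) * PP x y"
proof -
  define W where "W = Dt (PP x y) - Dt (GG x y) * PP x y"
  have "fps_deriv W = HH x y * W"
    unfolding W_def
    by (simp add: fps_deriv_mult Dt_deriv P_ode G_deriv Dt_mult algebra_simps)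
  moreover have "W $ 0 = 0" by (simp add: W_def P0 GG_def)
  ultimately have "W = 0" by (rule ode_zero_mult)
  then show ?thesis by (simp add: W_def)
qed

lemma graded_P: "graded (PP x y)"
  by (simp add: graded_def PP_def Afps_def chsum_small)

lemma graded_G: "graded (GG x y)"
  by (auto simp: graded_def GG_def Bq_def chsum_small)

lemma theta_eq_main: "theta (ev (PP x y)) = theta (ev (GG x y)) * ev (PP x y)"
  by (simp add: Dt_ode ev_mult graded_Dt graded_P graded_G flip: ev_Dt)


lemma evP_F: "ev (PP x y) = F_series x y"
proof (rule fps_ext)
  fix d
  have "F_series x y $ d = (\<Sum>n\<le>d. \<Sum>ds\<in>chainsN n d. let L = 0 # ds in
      (\<Prod>i\<in>{1..length ds}. y (L!i - L!(i-1)) + x (L!i - L!(i-1)) * of_nat (L!(i-1)))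
      / fact (length ds))"
    by (simp add: F_series_def F_coeff_def sum_chains_group)
  also have "\<dots> = (\<Sum>n\<le>d. (fps_const (1 / fact n) * Afps x y n) $ d)"
  proof (intro sum.cong refl)
    fix n assume "n \<in> {..d}"
    show "(\<Sum>ds\<in>chainsN n d. let L = 0 # ds in
      (\<Prod>i\<in>{1..length ds}. y (L!i - L!(i-1)) + x (L!i - L!(i-1)) * of_nat (L!(i-1)))
      / fact (length ds)) = (fps_const (1 / fact n) * Afps x y n) $ d"
      by (simp add: Afps_def chsum_def sum_distrib_left chprod_def wF_def Let_def)
        (intro sum.cong refl, auto simp: chainsN_def)
  qed
  also have "\<dots> = ev (PP x y) $ d" by (simp add: ev_nth PP_def)
  finally show "ev (PP x y) $ d = F_series x y $ d" ..
qed

lemma chprod_wB: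
  assumes "ds \<in> chains d" "ds \<noteq> []"
  shows "chprod (wB x y) ds = y ((0#ds)!1) *
     (\<Prod>i\<in>{2..length ds}. x ((0#ds)!i - (0#ds)!(i-1)) * of_nat ((0#ds)!(i-1)))"
proof -
  have s: "sorted_wrt (<) (0#ds)" using assms by (simp add: chains_def)
  have "chprod (wB x y) ds = wB x y ((0#ds)!0) ((0#ds)!1) *
      (\<Prod>i\<in>{Suc 1..length ds}. wB x y ((0#ds)!(i-1)) ((0#ds)!i))"
    unfolding chprod_def using assms(2) by (subst prod.atLeast_Suc_atMost) (auto simp: Suc_le_eq)
  also have "(\<Prod>i\<in>{Suc 1..length ds}. wB x y ((0#ds)!(i-1)) ((0#ds)!i)) =
     (\<Prod>i\<in>{2..length ds}. x ((0#ds)!i - (0#ds)!(i-1)) * of_nat ((0#ds)!(i-1)))"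
  proof (intro prod.cong refl)
    fix i assume i: "i \<in> {2..length ds}"
    have "(0#ds)!0 < (0#ds)!(i-1)"
      using sorted_wrt_nth_less[OF s, of 0 "i-1"] i by auto
    then show "wB x y ((0#ds)!(i-1)) ((0#ds)!i) = x ((0#ds)!i - (0#ds)!(i-1)) * of_nat ((0#ds)!(i-1))"
      by (simp add: wB_def)
  qed auto
  moreover have "wB x y ((0#ds)!0) ((0#ds)!1) = y ((0#ds)!1)" by (simp add: wB_def)
  ultimately show ?thesis by (simp only:)
qed

lemma evG_rhs:
  assumes "d \<ge> 1"
  shows "ev (GG x y) $ d = (\<Sum>ds\<in>chains d. let L = 0 # ds in
            (y (L!1) * (\<Prod>i\<in>{2..length ds}. x (L!i - L!(i-1)) * of_nat (L!(i-1))))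
            / fact (length ds))"
proof -
  have "(\<Sum>ds\<in>chains d. let L = 0 # ds in
            (y (L!1) * (\<Prod>i\<in>{2..length ds}. x (L!i - L!(i-1)) * of_nat (L!(i-1))))
            / fact (length ds)) =
        (\<Sum>n\<le>d. \<Sum>ds\<in>chainsN n d. let L = 0 # ds in
            (y (L!1) * (\<Prod>i\<in>{2..length ds}. x (L!i - L!(i-1)) * of_nat (L!(i-1))))
            / fact (length ds))"
    by (rule sum_chains_group)
  also have "\<dots> = (\<Sum>n\<le>d. GG x y $ n $ d)"
  proof (intro sum.cong refl)
    fix n assume "n \<in> {..d}"
    show "(\<Sum>ds\<in>chainsN n d. let L = 0 # ds in
            (y (L!1) * (\<Prod>i\<in>{2..length ds}. x (L!i - L!(i-1)) * of_nat (L!(i-1))))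
            / fact (length ds)) = GG x y $ n $ d"
    proof (cases "n = 0")
      case True
      then show ?thesis using assms by (simp add: chainsN_0 GG_def)
    next
      case False
      then have "GG x y $ n $ d = (\<Sum>ds\<in>chainsN n d. chprod (wB x y) ds / fact n)"
        by (simp add: GG_def Bq_def chsum_def sum_distrib_left)
      also have "\<dots> = (\<Sum>ds\<in>chainsN n d. let L = 0 # ds in
            (y (L!1) * (\<Prod>i\<in>{2..length ds}. x (L!i - L!(i-1)) * of_nat (L!(i-1))))
            / fact (length ds))"
      proof (intro sum.cong refl)
        fix ds assume "ds \<in> chainsN n d"
        then have "ds \<in> chains d" "length ds = n" by (auto simp: chainsN_def)
        moreover then have "ds \<noteq> []" using False by auto
        ultimately show "chprod (wB x y) ds / fact n = (let L = 0 # ds in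
            (y (L!1) * (\<Prod>i\<in>{2..length ds}. x (L!i - L!(i-1)) * of_nat (L!(i-1))))
            / fact (length ds))"
          by (simp add: chprod_wB Let_def)
      qed
      finally show ?thesis by simp
    qed
  qed
  finally show ?thesis by (simp add: ev_nth)
qed

theorem mainTheorem17:
  fixes x y y' :: "nat \<Rightarrow> 'a::field_char_0"
  assumes "F_series x y = fps_compose (fps_exp 1) (Abs_fps (\<lambda>d. if d = 0 then 0 else y' d))"
  shows "\<forall>d\<ge>1. y' d = (\<Sum>ds\<in>chains d. let L = 0 # ds in
            (y (L!1) * (\<Prod>i\<in>{2..length ds}. x (L!i - L!(i-1)) * of_nat (L!(i-1))))
            / fact (length ds))"
proof (intro allI impI)
  fix d :: nat assume d: "d \<ge> 1"
  define Yp :: "'a fps" where "Yp = Abs_fps (\<lambda>d. if d = 0 then 0 else y' d)"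
  define F where "F = F_series x y"
  define Z where "Z = ev (GG x y)"
  have F: "F = fps_exp 1 oo Yp" using assms by (simp add: F_def Yp_def)
  have "fps_deriv F = F * fps_deriv Yp"
    unfolding F by (subst fps_compose_deriv) (auto simp: Yp_def)
  then have t1: "theta F = F * theta Yp" by (simp add: theta_eq algebra_simps)
  have t2: "theta F = theta Z * F"
    using theta_eq_main[of x y] by (simp add: F_def Z_def evP_F)
  have F0: "F $ 0 = 1" using P0[of x y] by (simp add: F_def flip: evP_F add: ev_nth)
  then have "F \<noteq> 0" by auto
  moreover have "F * (theta Yp - theta Z) = theta F - theta F"
    by (simp only: right_diff_distrib) (metis t1 t2 mult.commute)
  then have "F * (theta Yp - theta Z) = 0" by simp
  ultimately have "theta Yp - theta Z = 0" by (metis mult_eq_0_iff)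
  then have "theta Yp = theta Z" by simp
  then have "theta Yp $ d = theta Z $ d" by simp
  then have "of_nat d * y' d = of_nat d * Z $ d" using d by (simp add: Yp_def)
  then have "y' d = Z $ d" using d by simp
  then show "y' d = (\<Sum>ds\<in>chains d. let L = 0 # ds in
            (y (L!1) * (\<Prod>i\<in>{2..length ds}. x (L!i - L!(i-1)) * of_nat (L!(i-1))))
            / fact (length ds))"
    using evG_rhs[OF d, of x y] by (simp add: Z_def)
qed

end
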